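(* Let $s$ be a scoring vector with all entries positive, and assume $m=dn$ with $d$ a positive integer. There exist a preference profile $P$ and a vector $k$ (namely $k_1=\cdots=k_n=d$) such that $$\frac{(n-1)\sum_{j=1}^{d}s_j+\sum_{j=d+1}^{2d}s_j}{\sum_{j=1}^m s_j}\le\mathcal{P}^u_{AtoP}\le\frac{n\sum_{j=1}^{d}s_j}{\sum_{j=1}^m s_j},$$ $$\frac{\sum_{j=d+1}^{2d}s_j}{\sum_{j=(n-1)d+1}^m s_j}\le\mathcal{P}^e_{AtoP}\le\frac{\sum_{j=1}^{d}s_j}{\sum_{j=(n-1)d+1}^m s_j},$$ $$\frac{\big(\sum_{j=1}^{d}s_j\big)^{n-1}\big(\sum_{j=d+1}^{2d}s_j\big)}{\prod_{i=1}^n\sum_{j=(i-1)d+1}^{id}s_j}\le\mathcal{P}^n_{AtoP}\le\frac{\big(\sum_{j=1}^{d}s_j\big)^{n}}{\prod_{i=1}^n\sum_{j=(i-1)d+1}^{id}s_j}.$$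
   Context: There are $n$ agents $a_1,\ldots,a_n$ and $m$ items. A preference profile $P=(\succ_{a_1},\ldots,\succ_{a_n})$ assigns to each agent a strict ranking of the items. A scoring vector $s=(s_1,\ldots,s_m)$ satisfies $s_1\ge\cdots\ge s_m$; an agent's value for her $j$-th preferred item is $s_j$, utilities are additive. Given $k=(k_1,\ldots,k_n)$ with non-negative integer entries summing to $m$, agent $a_1$ first picks $k_1$ items, then $a_2$ picks $k_2$ of the remaining ones, etc., each greedily picking her most preferred remaining items; $U^k_P(a)$ is the total score $a$ receives. $SW^u_P(k)=\sum_a U^k_P(a)$, $SW^e_P(k)=\min_a U^k_P(a)$, $SW^n_P(k)=\prod_a U^k_P(a)$. For a permutation $\pi$ of $[n]$, $P_\pi$ is the profile obtained from $P$ by permuting the agents' rankings according to $\pi$. The price of assignment of agents to positions is $\mathcal{P}^x_{AtoP}=\max_{\pi}SW^x_{P_\pi}(k)/\min_{\pi}SW^x_{P_\pi}(k)$ for $x\in\{u,e,n\}$, with $\pi$ ranging over all permutations of $[n]$. *)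

theory Defs
  imports Complex_Main "HOL-Combinatorics.Permutations"
begin

(* Agents are 0..n-1 (agent a_{i+1} is index i), items are 0..m-1.
   A profile P maps each agent i to her ranking, a list of the items from most
   to least preferred.  A scoring vector is s :: nat => real, indexed 1..m. *)

definition is_profile :: "nat \<Rightarrow> nat \<Rightarrow> (nat \<Rightarrow> nat list) \<Rightarrow> bool" where
  "is_profile n m P \<longleftrightarrow> (\<forall>i<n. distinct (P i) \<and> set (P i) = {..<m})"

definition is_scoring_vector :: "nat \<Rightarrow> (nat \<Rightarrow> real) \<Rightarrow> bool" where
  "is_scoring_vector m s \<longleftrightarrow> (\<forall>j. 1 \<le> j \<and> j < m \<longrightarrow> s (Suc j) \<le> s j)"

fun taken :: "(nat \<Rightarrow> nat list) \<Rightarrow> (nat \<Rightarrow> nat) \<Rightarrow> nat \<Rightarrow> nat set" where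
  "taken P k 0 = {}"
| "taken P k (Suc i) = taken P k i \<union> set (take (k i) (filter (\<lambda>x. x \<notin> taken P k i) (P i)))"

definition bundle_of :: "(nat \<Rightarrow> nat list) \<Rightarrow> (nat \<Rightarrow> nat) \<Rightarrow> nat \<Rightarrow> nat set" where
  "bundle_of P k i = set (take (k i) (filter (\<lambda>x. x \<notin> taken P k i) (P i)))"

(* U^k_P(a_i): sum of s_j over positions j (1-based) in her ranking of picked items *)
definition utility :: "(nat \<Rightarrow> real) \<Rightarrow> (nat \<Rightarrow> nat list) \<Rightarrow> (nat \<Rightarrow> nat) \<Rightarrow> nat \<Rightarrow> real" where
  "utility s P k i = (\<Sum>j\<in>{j. j < length (P i) \<and> P i ! j \<in> bundle_of P k i}. s (Suc j))"

definition SW_u :: "nat \<Rightarrow> (nat \<Rightarrow> real) \<Rightarrow> (nat \<Rightarrow> nat list) \<Rightarrow> (nat \<Rightarrow> nat) \<Rightarrow> real" where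
  "SW_u n s P k = (\<Sum>i<n. utility s P k i)"

definition SW_e :: "nat \<Rightarrow> (nat \<Rightarrow> real) \<Rightarrow> (nat \<Rightarrow> nat list) \<Rightarrow> (nat \<Rightarrow> nat) \<Rightarrow> real" where
  "SW_e n s P k = Min ((\<lambda>i. utility s P k i) ` {..<n})"

definition SW_n :: "nat \<Rightarrow> (nat \<Rightarrow> real) \<Rightarrow> (nat \<Rightarrow> nat list) \<Rightarrow> (nat \<Rightarrow> nat) \<Rightarrow> real" where
  "SW_n n s P k = (\<Prod>i<n. utility s P k i)"

(* price of assignment of agents to positions for welfare function SW;
   P_pi assigns to agent i the ranking P (pi i) *)
definition price_AtoP ::
  "(nat \<Rightarrow> (nat \<Rightarrow> real) \<Rightarrow> (nat \<Rightarrow> nat list) \<Rightarrow> (nat \<Rightarrow> nat) \<Rightarrow> real)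
   \<Rightarrow> nat \<Rightarrow> (nat \<Rightarrow> real) \<Rightarrow> (nat \<Rightarrow> nat list) \<Rightarrow> (nat \<Rightarrow> nat) \<Rightarrow> real" where
  "price_AtoP SW n s P k =
     Max {SW n s (P \<circ> \<pi>) k | \<pi>. \<pi> permutes {..<n}} /
     Min {SW n s (P \<circ> \<pi>) k | \<pi>. \<pi> permutes {..<n}}"

end

theory Submission
  imports Defs
begin

lemma take_filter_mono:
  assumes "distinct L" "j < j'" "j' < length L" "p (L!j)" "L!j' \<in> set (take d (filter p L))"
  shows "L!j \<in> set (take d (filter p L))"
using assms
proof (induction L arbitrary: j j' d)
  case Nil then show ?case by simp
next
  case (Cons a L)
  show ?case
  proof (cases j)
    case 0
    then have "p a" using Cons by simp
    have "d \<noteq> 0" using Cons.prems(5) by (cases d) auto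
    then show ?thesis using 0 \<open>p a\<close> by (cases d) auto
  next
    case (Suc j0)
    then obtain j0' where j': "j' = Suc j0'" using Cons.prems(2) by (cases j') auto
    have "L!j0' \<noteq> a" using Cons.prems(1,3) j' by auto
    show ?thesis
    proof (cases "p a")
      case True
      then obtain d0 where d: "d = Suc d0" using Cons.prems(5) by (cases d) auto
      then have "L!j0' \<in> set (take d0 (filter p L))" using Cons.prems(5) j' True \<open>L!j0' \<noteq> a\<close> by simp
      then have "L!j0 \<in> set (take d0 (filter p L))" using Cons.IH[of j0 j0' d0] Cons.prems Suc j' by auto
      then show ?thesis using Suc d True by simp
    next
      case False
      then show ?thesis using Cons.IH[of j0 j0' d] Cons.prems Suc j' by auto
    qed
  qed
qed

lemma sum_lower:
  fixes f :: "nat \<Rightarrow> real"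
  assumes "finite J" "card J = d" "\<forall>j\<in>J. card {j'. j' < j \<and> j' \<notin> J} \<le> t"
    "d + t \<le> m" "\<forall>a b. a \<le> b \<longrightarrow> b < m \<longrightarrow> f b \<le> f a"
  shows "(\<Sum>r<d. f (r + t)) \<le> sum f J"
using assms proof (induction d arbitrary: J)
  case 0 then show ?case by simp
next
  case (Suc d)
  define jm where "jm = Max J"
  have ne: "J \<noteq> {}" using Suc.prems(2) by auto
  have jm: "jm \<in> J" using Max_in[OF Suc.prems(1) ne] jm_def by simp
  define J' where "J' = J - {jm}"
  have fJ': "finite J'" using Suc.prems(1) J'_def by simp
  have cJ': "card J' = d" using Suc.prems(2) jm J'_def Suc.prems(1) by simp
  have J'lt: "J' \<subseteq> {..<jm}" using Max_ge[OF Suc.prems(1)] jm_def J'_def by fastforce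
  have "\<forall>j\<in>J'. card {j'. j' < j \<and> j' \<notin> J'} \<le> t"
  proof
    fix j assume j: "j \<in> J'"
    then have "j < jm" using J'lt by auto
    then have "{j'. j' < j \<and> j' \<notin> J'} = {j'. j' < j \<and> j' \<notin> J}" using J'_def by auto
    then show "card {j'. j' < j \<and> j' \<notin> J'} \<le> t" using Suc.prems(3) j J'_def by auto
  qed
  then have IH: "(\<Sum>r<d. f (r + t)) \<le> sum f J'" using Suc.IH[of J'] Suc.prems fJ' cJ' by auto
  have fin2: "finite {j'. j' < jm \<and> j' \<notin> J}" by (rule finite_subset[of _ "{..<jm}"]) auto
  have "{..<jm} \<subseteq> J' \<union> {j'. j' < jm \<and> j' \<notin> J}" using J'_def by auto
  then have "card {..<jm} \<le> card (J' \<union> {j'. j' < jm \<and> j' \<notin> J})"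
    using fJ' fin2 by (intro card_mono) auto
  also have "\<dots> \<le> card J' + card {j'. j' < jm \<and> j' \<notin> J}" by (rule card_Un_le)
  also have "\<dots> \<le> d + t" using cJ' Suc.prems(3) jm by auto
  finally have "jm \<le> d + t" by simp
  then have "f (d + t) \<le> f jm" using Suc.prems(4,5) by auto
  have "sum f J = f jm + sum f J'" using J'_def jm Suc.prems(1) by (simp add: sum.remove)
  then show ?case using IH \<open>f (d+t) \<le> f jm\<close> by simp
qed

lemma sum_upper:
  fixes f :: "nat \<Rightarrow> real"
  assumes "finite J" "J \<subseteq> {..<m}" "card J = d"
    "\<forall>a b. a \<le> b \<longrightarrow> b < m \<longrightarrow> f b \<le> f a"
  shows "sum f J \<le> (\<Sum>r<d. f r)"
using assms proof (induction d arbitrary: J)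
  case 0 then show ?case by simp
next
  case (Suc d)
  define jm where "jm = Max J"
  have ne: "J \<noteq> {}" using Suc.prems(3) by auto
  have jm: "jm \<in> J" using Max_in[OF Suc.prems(1) ne] jm_def by simp
  define J' where "J' = J - {jm}"
  have fJ': "finite J'" using Suc.prems(1) J'_def by simp
  have cJ': "card J' = d" using Suc.prems(3) jm J'_def Suc.prems(1) by simp
  have J'lt: "J' \<subseteq> {..<jm}" using Max_ge[OF Suc.prems(1)] jm_def J'_def by fastforce
  have IH: "sum f J' \<le> (\<Sum>r<d. f r)" using Suc.IH[of J'] Suc.prems fJ' cJ' J'_def by auto
  have "d \<le> jm" using card_mono[OF _ J'lt] cJ' by simp
  moreover have "jm < m" using jm Suc.prems(2) by auto
  ultimately have "f jm \<le> f d" using Suc.prems(4) by auto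
  have "sum f J = f jm + sum f J'" using J'_def jm Suc.prems(1) by (simp add: sum.remove)
  then show ?case using IH \<open>f jm \<le> f d\<close> by simp
qed

lemma sv_mono:
  assumes "is_scoring_vector m s" "a \<le> b" "b < m"
  shows "s (Suc b) \<le> s (Suc a)"
using assms(2,3) proof (induction b rule: dec_induct)
  case base then show ?case by simp
next
  case (step b)
  have "s (Suc (Suc b)) \<le> s (Suc b)" using assms(1) step.prems unfolding is_scoring_vector_def by auto
  then show ?case using step by simp
qed


lemma bundle_gen:
  assumes "distinct L" "set L = {..<m}" "T \<subseteq> {..<m}" "card T + d \<le> m"
  shows "card (set (take d (filter (\<lambda>x. x \<notin> T) L))) = d \<and>
         set (take d (filter (\<lambda>x. x \<notin> T) L)) \<subseteq> {..<m} - T"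
proof -
  let ?F = "filter (\<lambda>x. x \<notin> T) L"
  have sF: "set ?F = {..<m} - T" using assms(2) by auto
  have dF: "distinct ?F" using assms(1) by simp
  have "length ?F = card ({..<m} - T)" using distinct_card[OF dF] sF by simp
  also have "\<dots> = m - card T" using assms(3) by (simp add: card_Diff_subset finite_subset)
  finally have lenF: "d \<le> length ?F" using assms(4) by simp
  have "card (set (take d ?F)) = d" using distinct_card[of "take d ?F"] dF lenF by simp
  moreover have "set (take d ?F) \<subseteq> {..<m} - T" using set_take_subset[of d ?F] sF by blast
  ultimately show ?thesis by blast
qed

lemma taken_props:
  assumes "is_profile n m Q" "m = d * n" "p \<le> n"
  shows "taken Q (\<lambda>_. d) p \<subseteq> {..<m} \<and> card (taken Q (\<lambda>_. d) p) = p * d"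
using assms(3) proof (induction p)
  case 0 show ?case by simp
next
  case (Suc p)
  let ?T = "taken Q (\<lambda>_. d) p"
  have IH: "?T \<subseteq> {..<m}" "card ?T = p*d" using Suc by auto
  have pn: "p < n" using Suc.prems by simp
  have L: "distinct (Q p)" "set (Q p) = {..<m}" using assms(1) pn unfolding is_profile_def by auto
  have "Suc p * d \<le> n * d" using pn by (intro mult_le_mono1) simp
  then have "card ?T + d \<le> m" using IH assms(2) by (simp add: mult.commute)
  from bundle_gen[OF L IH(1) this]
  have B: "card (set (take d (filter (\<lambda>x. x \<notin> ?T) (Q p)))) = d"
     "set (take d (filter (\<lambda>x. x \<notin> ?T) (Q p))) \<subseteq> {..<m} - ?T" by auto
  have "card (taken Q (\<lambda>_. d) (Suc p)) = card ?T + d"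
  proof -
    have f1: "finite ?T" using IH(1) finite_subset by blast
    have "?T \<inter> set (take d (filter (\<lambda>x. x \<notin> ?T) (Q p))) = {}" using B(2) by blast
    then have "card (?T \<union> set (take d (filter (\<lambda>x. x \<notin> ?T) (Q p)))) = card ?T + d"
      using card_Un_disjoint[OF f1, of "set (take d (filter (\<lambda>x. x \<notin> ?T) (Q p)))"] B(1) by simp
    then show ?thesis by simp
  qed
  then show ?case using B IH by auto
qed

lemma utility_bounds:
  assumes prof: "is_profile n m Q" and m: "m = d * n" and sv: "is_scoring_vector m s" and p: "p < n"
  shows "(\<Sum>r<d. s (Suc (r + p*d))) \<le> utility s Q (\<lambda>_. d) p \<and>
         utility s Q (\<lambda>_. d) p \<le> (\<Sum>r<d. s (Suc r))"
proof -
  let ?T = "taken Q (\<lambda>_. d) p"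
  let ?L = "Q p"
  have TT: "?T \<subseteq> {..<m}" "card ?T = p*d" using taken_props[OF prof m] p by auto
  have L: "distinct ?L" "set ?L = {..<m}" using prof p unfolding is_profile_def by auto
  have lenL: "length ?L = m" using distinct_card[OF L(1)] L(2) by simp
  have "Suc p * d \<le> n * d" using p by (intro mult_le_mono1) simp
  then have cTd: "card ?T + d \<le> m" using TT m by (simp add: mult.commute)
  let ?B = "bundle_of Q (\<lambda>_. d) p"
  have Bdef: "?B = set (take d (filter (\<lambda>x. x \<notin> ?T) ?L))" unfolding bundle_of_def by simp
  have B: "card ?B = d" "?B \<subseteq> {..<m} - ?T" using bundle_gen[OF L TT(1) cTd] Bdef by auto
  define J where "J = {j. j < length ?L \<and> ?L ! j \<in> ?B}"
  have Jsub: "J \<subseteq> {..<m}" using lenL J_def by auto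
  have fJ: "finite J" using Jsub finite_subset by blast
  have injL: "inj_on (nth ?L) {..<m}" using L(1) lenL by (simp add: inj_on_nth)
  have "nth ?L ` J = ?B"
  proof
    show "nth ?L ` J \<subseteq> ?B" using J_def by auto
    show "?B \<subseteq> nth ?L ` J"
    proof
      fix b assume b: "b \<in> ?B"
      then have "b \<in> set ?L" using B(2) L(2) by auto
      then obtain j where "j < length ?L" "?L ! j = b" by (auto simp: in_set_conv_nth)
      then show "b \<in> nth ?L ` J" using b J_def by auto
    qed
  qed
  then have cJ: "card J = d" using card_image[OF inj_on_subset[OF injL Jsub]] B(1) by simp
  have ut: "utility s Q (\<lambda>_. d) p = sum (\<lambda>j. s (Suc j)) J" unfolding utility_def J_def by simp
  have anti: "\<forall>a b. a \<le> b \<longrightarrow> b < m \<longrightarrow> s (Suc b) \<le> s (Suc a)" using sv_mono[OF sv] by blast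
  have up: "sum (\<lambda>j. s (Suc j)) J \<le> (\<Sum>r<d. s (Suc r))"
    by (rule sum_upper[OF fJ Jsub cJ anti])
  define TP where "TP = {j'. j' < m \<and> ?L ! j' \<in> ?T}"
  have "nth ?L ` TP = ?T"
  proof
    show "nth ?L ` TP \<subseteq> ?T" using TP_def by auto
    show "?T \<subseteq> nth ?L ` TP"
    proof
      fix b assume b: "b \<in> ?T"
      then have "b \<in> set ?L" using TT(1) L(2) by auto
      then obtain j where "j < length ?L" "?L ! j = b" by (auto simp: in_set_conv_nth)
      then show "b \<in> nth ?L ` TP" using b TP_def lenL by auto
    qed
  qed
  moreover have "inj_on (nth ?L) TP" by (rule inj_on_subset[OF injL]) (auto simp: TP_def)
  ultimately have cTP: "card TP = p * d" using card_image TT(2) by metis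
  have cond: "\<forall>j\<in>J. card {j'. j' < j \<and> j' \<notin> J} \<le> p * d"
  proof
    fix j assume j: "j \<in> J"
    have "{j'. j' < j \<and> j' \<notin> J} \<subseteq> TP"
    proof
      fix j' assume j': "j' \<in> {j'. j' < j \<and> j' \<notin> J}"
      have jl: "j < length ?L" "?L ! j \<in> ?B" using j J_def by auto
      have "?L ! j' \<in> ?T"
      proof (rule ccontr)
        assume "?L ! j' \<notin> ?T"
        then have "?L ! j' \<in> ?B" using take_filter_mono[OF L(1), of j' j "\<lambda>x. x \<notin> ?T" d] j' jl Bdef by auto
        then show False using j' jl J_def by auto
      qed
      then show "j' \<in> TP" using j' jl lenL TP_def by auto
    qed
    moreover have "finite TP" using TP_def by simp
    ultimately show "card {j'. j' < j \<and> j' \<notin> J} \<le> p * d" using cTP card_mono by metis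
  qed
  have lo: "(\<Sum>r<d. s (Suc (r + p*d))) \<le> sum (\<lambda>j. s (Suc j)) J"
    using sum_lower[OF fJ cJ cond _ anti] cTd TT(2) by (simp add: add.commute)
  show ?thesis using up lo ut by simp
qed


lemma blk_iff: "0 < (d::nat) \<Longrightarrow> (p*d \<le> x \<and> x < p*d + d) \<longleftrightarrow> x div d = p"
  by (smt (verit, del_insts) Euclidean_Rings.div_eq_0_iff
    add_cancel_left_right div_mult_self4 less_eq_div_iff_mult_less_eq
    mult.commute nat_add_left_cancel_less nat_le_iff_add neq0_conv)

lemma upt_split3: "i \<le> j \<Longrightarrow> j \<le> k \<Longrightarrow> [i..<k] = [i..<j] @ [j..<(k::nat)]"
  by (metis le_iff_add upt_add_eq_append)

definition gf :: "(nat \<Rightarrow> nat) \<Rightarrow> nat \<Rightarrow> nat \<Rightarrow> nat" where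
  "gf ord d j = ord (j div d) * d + j mod d"

lemma gf_blk: "0 < d \<Longrightarrow> r < d \<Longrightarrow> gf ord d (c*d + r) = ord c * d + r"
  unfolding gf_def by simp

lemma gf_div: "0 < d \<Longrightarrow> gf ord d j div d = ord (j div d)"
  unfolding gf_def by simp

lemma gf_mod: "0 < d \<Longrightarrow> gf ord d j mod d = j mod d"
  unfolding gf_def by simp

lemma gf_profile:
  assumes d: "0 < d" and inj: "inj_on ord {..<n}" and img: "ord ` {..<n} \<subseteq> {..<n}"
  shows "distinct (map (gf ord d) [0..<d*n]) \<and> set (map (gf ord d) [0..<d*n]) = {..<d*n}"
proof -
  have sub: "gf ord d ` {..<d*n} \<subseteq> {..<d*n}"
  proof
    fix x assume "x \<in> gf ord d ` {..<d*n}"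
    then obtain j where j: "j < d*n" "x = gf ord d j" by auto
    have "j div d < n" using j d by (simp add: div_less_iff_less_mult mult.commute)
    then have o: "ord (j div d) < n" using img by auto
    have "x div d < n" using o j gf_div[OF d] by simp
    then show "x \<in> {..<d*n}" using d by (simp add: div_less_iff_less_mult mult.commute)
  qed
  have ij: "inj_on (gf ord d) {..<d*n}"
  proof (rule inj_onI)
    fix a b assume a: "a \<in> {..<d*n}" and b: "b \<in> {..<d*n}" and e: "gf ord d a = gf ord d b"
    have "a div d < n" "b div d < n" using a b d by (auto simp: div_less_iff_less_mult mult.commute)
    moreover have "ord (a div d) = ord (b div d)" using e gf_div[OF d, of ord] by metis
    ultimately have "a div d = b div d" using inj by (auto dest: inj_onD)
    moreover have "a mod d = b mod d" using e gf_mod[OF d, of ord] by metis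
    ultimately show "a = b" by (metis div_mult_mod_eq)
  qed
  have "distinct (map (gf ord d) [0..<d*n])" using ij by (simp add: distinct_map atLeast0LessThan)
  moreover have "set (map (gf ord d) [0..<d*n]) = {..<d*n}"
    using endo_inj_surj[OF _ sub ij] by (simp add: atLeast0LessThan)
  ultimately show ?thesis by blast
qed

lemma bundle_calc:
  assumes d: "0 < d" and cm: "c*d + d \<le> m" and oc: "ord c = p" and before: "\<forall>c'<c. ord c' < p"
  shows "set (take d (filter (\<lambda>x. x \<notin> {..<p*d}) (map (gf ord d) [0..<m]))) = {p*d..<p*d+d}"
proof -
  have split: "[0..<m] = [0..<c*d] @ [c*d..<c*d+d] @ [c*d+d..<m]"
    using cm by (metis upt_split3 le_add1 zero_le append.assoc)
  have A: "filter (\<lambda>x. x \<notin> {..<p*d}) (map (gf ord d) [0..<c*d]) = []"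
  proof (rule filter_False, clarsimp)
    fix j assume j: "j < c*d"
    have "j div d < c" using j d by (simp add: div_less_iff_less_mult)
    then have "ord (j div d) < p" using before by auto
    then have "Suc (ord (j div d)) * d \<le> p * d" by (intro mult_le_mono1) simp
    moreover have "j mod d < d" using d by simp
    ultimately show "gf ord d j < p * d" unfolding gf_def by simp
  qed
  have B: "filter (\<lambda>x. x \<notin> {..<p*d}) (map (gf ord d) [c*d..<c*d+d]) = map (gf ord d) [c*d..<c*d+d]"
  proof (rule filter_True)
    show "\<forall>x\<in>set (map (gf ord d) [c*d..<c*d+d]). x \<notin> {..<p*d}"
    proof
      fix x assume "x \<in> set (map (gf ord d) [c*d..<c*d+d])"
      then obtain j where j: "c*d \<le> j" "j < c*d+d" "x = gf ord d j" by auto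
      have "j div d = c" using j blk_iff[OF d] by blast
      then show "x \<notin> {..<p*d}" using oc j unfolding gf_def by simp
    qed
  qed
  have "take d (filter (\<lambda>x. x \<notin> {..<p*d}) (map (gf ord d) [0..<m])) = map (gf ord d) [c*d..<c*d+d]"
    by (subst split) (simp only: map_append filter_append A B take_append, simp)
  moreover have "gf ord d ` {c*d..<c*d+d} = {p*d..<p*d+d}"
  proof
    show "gf ord d ` {c*d..<c*d+d} \<subseteq> {p*d..<p*d+d}"
    proof
      fix x assume "x \<in> gf ord d ` {c*d..<c*d+d}"
      then obtain j where j: "c*d \<le> j" "j < c*d+d" "x = gf ord d j" by auto
      have "j = c*d + (j - c*d)" using j by simp
      then have "x = p*d + (j - c*d)" using j gf_blk[OF d, of "j - c*d" ord c] oc by simp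
      then show "x \<in> {p*d..<p*d+d}" using j by (simp only: atLeastLessThan_iff) linarith
    qed
    show "{p*d..<p*d+d} \<subseteq> gf ord d ` {c*d..<c*d+d}"
    proof
      fix x assume x: "x \<in> {p*d..<p*d+d}"
      have "x - p*d < d" using x by auto
      then have "gf ord d (c*d + (x - p*d)) = ord c * d + (x - p*d)" by (rule gf_blk[OF d])
      then have "gf ord d (c*d + (x - p*d)) = x" using x oc by simp
      moreover have "c*d + (x - p*d) \<in> {c*d..<c*d+d}" using x by auto
      ultimately show "x \<in> gf ord d ` {c*d..<c*d+d}" by (metis image_eqI)
    qed
  qed
  ultimately show ?thesis by simp
qed

lemma J_calc:
  assumes d: "0 < d" and inj: "inj_on ord {..<n}" and oc: "ord c = p" and cn: "c < n"
  shows "{j. j < length (map (gf ord d) [0..<d*n]) \<and> map (gf ord d) [0..<d*n] ! j \<in> {p*d..<p*d+d}}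
         = {c*d..<c*d+d}"
proof -
  have key: "j < d*n \<Longrightarrow> (gf ord d j \<in> {p*d..<p*d+d}) = (j \<in> {c*d..<c*d+d})" for j
  proof -
    assume j: "j < d*n"
    have jn: "j div d < n" using j d by (simp add: div_less_iff_less_mult mult.commute)
    have "(gf ord d j \<in> {p*d..<p*d+d}) = (gf ord d j div d = p)" using blk_iff[OF d] by auto
    also have "\<dots> = (ord (j div d) = ord c)" using gf_div[OF d] oc by simp
    also have "\<dots> = (j div d = c)" using inj jn cn by (auto dest: inj_onD)
    also have "\<dots> = (j \<in> {c*d..<c*d+d})" using blk_iff[OF d] by auto
    finally show ?thesis .
  qed
  have cd: "c*d + d \<le> d*n" using cn by (metis Suc_leI mult.commute mult_Suc mult_le_mono1 add.commute)
  show ?thesis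
  proof (rule set_eqI)
    fix j
    show "j \<in> {j. j < length (map (gf ord d) [0..<d*n]) \<and> map (gf ord d) [0..<d*n] ! j \<in> {p*d..<p*d+d}}
         \<longleftrightarrow> j \<in> {c*d..<c*d+d}"
    proof (cases "j < d*n")
      case True
      then show ?thesis using key[OF True] by simp
    next
      case False
      then show ?thesis using cd by auto
    qed
  qed
qed

lemma taken_calc:
  assumes "\<forall>p<n. set (take d (filter (\<lambda>x. x \<notin> {..<p*d}) (Q p))) = {p*d..<p*d+d}" "p \<le> n"
  shows "taken Q (\<lambda>_. d) p = {..<p*d}"
using assms(2) proof (induction p)
  case 0 then show ?case by simp
next
  case (Suc p)
  then have "taken Q (\<lambda>_. d) p = {..<p*d}" by simp
  then show ?case using assms(1) Suc.prems by auto
qed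

lemma utility_calc:
  assumes d: "0 < d" and inj: "inj_on ord {..<n}" and oc: "ord c = p" and cn: "c < n"
    and Qp: "Q p = map (gf ord d) [0..<d*n]"
    and bun: "bundle_of Q k p = {p*d..<p*d+d}"
  shows "utility s Q k p = (\<Sum>r<d. s (Suc (r + c*d)))"
proof -
  have "utility s Q k p = (\<Sum>j\<in>{c*d..<c*d+d}. s (Suc j))"
    unfolding utility_def bun Qp J_calc[OF d inj oc cn] ..
  also have "\<dots> = (\<Sum>r<d. s (Suc (r + c*d)))"
    using sum.shift_bounds_nat_ivl[of "\<lambda>j. s (Suc j)" 0 "c*d" d]
    by (simp add: atLeast0LessThan add.commute)
  finally show ?thesis .
qed


definition ordf :: "nat \<Rightarrow> nat \<Rightarrow> nat \<Rightarrow> nat" where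
  "ordf n i c = (if i = 0 then (if c = 0 then 0 else if c = 1 then n - 1 else c - 1)
                 else (if c = 0 then i - 1 else if c \<le> i - 1 then c - 1 else c))"

definition Pex :: "nat \<Rightarrow> nat \<Rightarrow> nat \<Rightarrow> nat list" where
  "Pex n d i = map (gf (ordf n i) d) [0..<d*n]"

lemma ordf_props:
  assumes "2 \<le> n" "i < n"
  shows "inj_on (ordf n i) {..<n} \<and> ordf n i ` {..<n} \<subseteq> {..<n}"
  using assms by (auto simp: inj_on_def ordf_def split: if_splits)

lemma Pex_profile:
  assumes "2 \<le> n" "0 < d"
  shows "is_profile n (d*n) (Pex n d)"
  unfolding is_profile_def Pex_def
  using gf_profile[OF assms(2)] ordf_props[OF assms(1)] by blast

lemma order_utils:
  assumes n2: "2 \<le> n" and d: "0 < d"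
    and H: "\<forall>p<n. cf p < n \<and> ag p < n \<and> Q p = Pex n d (ag p) \<and> ordf n (ag p) (cf p) = p
              \<and> (\<forall>c'<cf p. ordf n (ag p) c' < p)"
  shows "\<forall>p<n. utility s Q (\<lambda>_. d) p = (\<Sum>r<d. s (Suc (r + cf p * d)))"
proof -
  have cdle: "c < n \<Longrightarrow> c*d + d \<le> d*n" for c
    by (metis Suc_leI mult.commute mult_Suc mult_le_mono1 add.commute)
  have bc: "\<forall>p<n. set (take d (filter (\<lambda>x. x \<notin> {..<p*d}) (Q p))) = {p*d..<p*d+d}"
  proof (intro allI impI)
    fix p assume p: "p < n"
    then show "set (take d (filter (\<lambda>x. x \<notin> {..<p*d}) (Q p))) = {p*d..<p*d+d}"
      using H bundle_calc[OF d cdle, of "cf p" "ordf n (ag p)" p] unfolding Pex_def by auto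
  qed
  show ?thesis
  proof (intro allI impI)
    fix p assume p: "p < n"
    have "taken Q (\<lambda>_. d) p = {..<p*d}" using taken_calc[OF bc] p by simp
    then have bun: "bundle_of Q (\<lambda>_. d) p = {p*d..<p*d+d}"
      unfolding bundle_of_def using bc p by simp
    have inj: "inj_on (ordf n (ag p)) {..<n}" using ordf_props[OF n2] H p by blast
    show "utility s Q (\<lambda>_. d) p = (\<Sum>r<d. s (Suc (r + cf p * d)))"
      using utility_calc[OF d inj _ _ _ bun] H p unfolding Pex_def by blast
  qed
qed

definition pimax :: "nat \<Rightarrow> nat \<Rightarrow> nat" where
  "pimax n p = (if p < n - 1 then p + 1 else if p = n - 1 then 0 else p)"

lemma pimax_permutes:
  assumes "2 \<le> n" shows "pimax n permutes {..<n}"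
proof (rule bij_imp_permutes)
  have inj: "inj_on (pimax n) {..<n}" using assms by (auto simp: inj_on_def pimax_def split: if_splits)
  have sub: "pimax n ` {..<n} \<subseteq> {..<n}" using assms by (auto simp: pimax_def)
  show "bij_betw (pimax n) {..<n} {..<n}"
    using endo_inj_surj[OF _ sub inj] inj by (simp add: bij_betw_def)
  show "\<And>x. x \<notin> {..<n} \<Longrightarrow> pimax n x = x" by (auto simp: pimax_def)
qed

lemma price_bounds:
  fixes SW :: "nat \<Rightarrow> (nat \<Rightarrow> real) \<Rightarrow> (nat \<Rightarrow> nat list) \<Rightarrow> (nat \<Rightarrow> nat) \<Rightarrow> real"
  assumes p1: "\<pi>1 permutes {..<n}" and p2: "\<pi>2 permutes {..<n}"
    and A: "A \<le> SW n s (P \<circ> \<pi>1) k" and B: "SW n s (P \<circ> \<pi>2) k \<le> B"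
    and LH: "\<And>\<pi>. \<pi> permutes {..<n} \<Longrightarrow> Lo \<le> SW n s (P \<circ> \<pi>) k \<and> SW n s (P \<circ> \<pi>) k \<le> Hi"
    and Lo: "0 < Lo"
  shows "A / B \<le> price_AtoP SW n s P k \<and> price_AtoP SW n s P k \<le> Hi / Lo"
proof -
  let ?S = "{SW n s (P \<circ> \<pi>) k | \<pi>. \<pi> permutes {..<n}}"
  have Seq: "?S = (\<lambda>\<pi>. SW n s (P \<circ> \<pi>) k) ` {\<pi>. \<pi> permutes {..<n}}" by blast
  have fin: "finite ?S" unfolding Seq by (rule finite_imageI) (simp add: finite_permutations)
  have ne: "?S \<noteq> {}" using p1 by blast
  have m1: "SW n s (P \<circ> \<pi>1) k \<le> Max ?S" using fin p1 by (intro Max_ge) blast+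
  have m2: "Min ?S \<le> SW n s (P \<circ> \<pi>2) k" using fin p2 by (intro Min_le) blast+
  have m3: "Lo \<le> Min ?S" using fin ne LH by auto
  have m4: "Max ?S \<le> Hi" using fin ne LH by auto
  have "A / B \<le> Max ?S / Min ?S"
    by (rule frac_le) (use m1 m2 m3 A B Lo LH[OF p1] in auto)
  moreover have "Max ?S / Min ?S \<le> Hi / Lo"
    by (rule frac_le) (use m1 m2 m3 m4 LH[OF p1] Lo in auto)
  ultimately show ?thesis unfolding price_AtoP_def by simp
qed

lemma blk_sum: "(\<Sum>j=a+1..a+d. s j) = (\<Sum>r<d. s (Suc (r + a)))"
  by (induction d) (simp_all add: add.commute)

theorem proposition3:
  fixes n m d :: nat and s :: "nat \<Rightarrow> real"
  assumes "n \<ge> 2" and "d \<ge> 1" and "m = d * n"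
    and "is_scoring_vector m s" and "\<forall>j\<in>{1..m}. s j > 0"
  shows "\<exists>P k. is_profile n m P \<and> (\<forall>i<n. k i = d) \<and>
    ((real (n - 1) * (\<Sum>j=1..d. s j) + (\<Sum>j=d+1..2*d. s j)) / (\<Sum>j=1..m. s j)
        \<le> price_AtoP SW_u n s P k \<and>
     price_AtoP SW_u n s P k \<le> (real n * (\<Sum>j=1..d. s j)) / (\<Sum>j=1..m. s j)) \<and>
    ((\<Sum>j=d+1..2*d. s j) / (\<Sum>j=(n-1)*d+1..m. s j) \<le> price_AtoP SW_e n s P k \<and>
     price_AtoP SW_e n s P k \<le> (\<Sum>j=1..d. s j) / (\<Sum>j=(n-1)*d+1..m. s j)) \<and>
    ((\<Sum>j=1..d. s j) ^ (n - 1) * (\<Sum>j=d+1..2*d. s j)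
        / (\<Prod>i=1..n. \<Sum>j=(i-1)*d+1..i*d. s j) \<le> price_AtoP SW_n n s P k \<and>
     price_AtoP SW_n n s P k \<le> (\<Sum>j=1..d. s j) ^ n / (\<Prod>i=1..n. \<Sum>j=(i-1)*d+1..i*d. s j))"
proof -
  have d0: "0 < d" using assms(2) by simp
  have n2: "2 \<le> n" using assms(1) .
  have sv: "is_scoring_vector m s" using assms(4) .
  define P where "P = Pex n d"
  define k :: "nat \<Rightarrow> nat" where "k = (\<lambda>_. d)"
  define S where "S = (\<lambda>p. \<Sum>r<d. s (Suc (r + p*d)))"
  have prof: "is_profile n m P" using Pex_profile[OF n2 d0] assms(3) P_def by simp
  have cdle: "c < n \<Longrightarrow> c*d + d \<le> m" for c
    using assms(3) by (metis Suc_leI mult.commute mult_Suc mult_le_mono1 add.commute)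
  have idx: "r < d \<Longrightarrow> p < n \<Longrightarrow> r + p*d < m" for r p using cdle[of p] by linarith
  have S_pos: "p < n \<Longrightarrow> 0 < S p" for p
    unfolding S_def
  proof (rule sum_pos)
    assume p: "p < n"
    show "finite {..<d}" by simp
    show "{..<d} \<noteq> {}" using d0 by auto
    fix r assume r: "r \<in> {..<d}"
    have "Suc (r + p * d) \<in> {1..m}" using idx[of r p] r p by auto
    then show "0 < s (Suc (r + p * d))" using assms(5) by blast
  qed
  have S_mono: "p \<le> q \<Longrightarrow> q < n \<Longrightarrow> S q \<le> S p" for p q
    unfolding S_def
  proof (rule sum_mono)
    fix r assume pq: "p \<le> q" "q < n" and r: "r \<in> {..<d}"
    have "r + p*d \<le> r + q*d" using pq by (simp add: mult_le_mono1)
    then show "s (Suc (r + q * d)) \<le> s (Suc (r + p * d))"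
      using sv_mono[OF sv] idx[of r q] r pq by auto
  qed
  have profpi: "\<pi> permutes {..<n} \<Longrightarrow> is_profile n m (P \<circ> \<pi>)" for \<pi>
  proof -
    assume pi: "\<pi> permutes {..<n}"
    have "\<forall>i<n. \<pi> i < n" using permutes_in_image[OF pi] by auto
    then show ?thesis using prof unfolding is_profile_def by auto
  qed
  have ub: "\<pi> permutes {..<n} \<Longrightarrow> p < n \<Longrightarrow> S p \<le> utility s (P \<circ> \<pi>) k p \<and> utility s (P \<circ> \<pi>) k p \<le> S 0"
    for \<pi> p using utility_bounds[OF profpi assms(3) sv, of \<pi> p] unfolding S_def k_def by simp
  have uid: "\<forall>p<n. utility s (P \<circ> id) k p = S p"
  proof -
    have "\<forall>p<n. utility s (P \<circ> id) (\<lambda>_. d) p = (\<Sum>r<d. s (Suc (r + id p * d)))"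
      by (rule order_utils[OF n2 d0, where cf=id and ag=id]) (auto simp: ordf_def P_def)
    then show ?thesis unfolding k_def S_def by simp
  qed
  have umax: "\<forall>p<n. utility s (P \<circ> pimax n) k p = S (if p < n - 1 then 0 else 1)"
  proof -
    have "\<forall>p<n. utility s (P \<circ> pimax n) (\<lambda>_. d) p
            = (\<Sum>r<d. s (Suc (r + (\<lambda>p. if p < n - 1 then 0 else 1) p * d)))"
      by (rule order_utils[OF n2 d0, where cf="\<lambda>p. if p < n - 1 then 0 else 1" and ag="pimax n"]) (use n2 in \<open>auto simp: ordf_def P_def pimax_def\<close>)
    then show ?thesis unfolding k_def S_def by simp
  qed
  have nsplit: "{..<n} = insert (n-1) {..<n-1}" using n2 by auto
  have S10: "S 1 \<le> S 0" using S_mono[of 0 1] n2 by simp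
  have Sn0: "p < n \<Longrightarrow> S (n-1) \<le> S p" for p using S_mono[of p "n-1"] n2 by simp
  have pm: "pimax n permutes {..<n}" by (rule pimax_permutes[OF n2])
  have pid: "id permutes {..<n}" by (rule permutes_id)
  have finU: "finite ((\<lambda>i. utility s Q k i) ` {..<n})" for Q by simp
  have neU: "(\<lambda>i. utility s Q k i) ` {..<n} \<noteq> {}" for Q using n2 by (simp add: lessThan_empty_iff)
  have U1: "SW_u n s (P \<circ> pimax n) k = real (n - 1) * S 0 + S 1"
  proof -
    have "SW_u n s (P \<circ> pimax n) k = utility s (P \<circ> pimax n) k (n-1) + (\<Sum>i<n-1. utility s (P \<circ> pimax n) k i)"
      unfolding SW_u_def nsplit by (simp add: sum.insert)
    moreover have "(\<Sum>i<n-1. utility s (P \<circ> pimax n) k i) = (\<Sum>i<n-1. S 0)"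
      by (rule sum.cong) (use umax in auto)
    moreover have "utility s (P \<circ> pimax n) k (n-1) = S 1" using umax n2 by auto
    ultimately show ?thesis by (simp add: algebra_simps)
  qed
  have U2: "SW_u n s (P \<circ> id) k = (\<Sum>p<n. S p)"
    unfolding SW_u_def by (rule sum.cong) (use uid in auto)
  have U3: "\<pi> permutes {..<n} \<Longrightarrow> (\<Sum>p<n. S p) \<le> SW_u n s (P \<circ> \<pi>) k \<and> SW_u n s (P \<circ> \<pi>) k \<le> real n * S 0" for \<pi>
  proof -
    assume pi: "\<pi> permutes {..<n}"
    have "(\<Sum>p<n. S p) \<le> SW_u n s (P \<circ> \<pi>) k" unfolding SW_u_def by (rule sum_mono) (use ub[OF pi] in auto)
    moreover have "SW_u n s (P \<circ> \<pi>) k \<le> (\<Sum>p<n. S 0)" unfolding SW_u_def by (rule sum_mono) (use ub[OF pi] in auto)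
    ultimately show ?thesis by simp
  qed
  have Upos: "0 < (\<Sum>p<n. S p)" using S_pos n2 by (intro sum_pos) (auto simp: lessThan_empty_iff)
  have PU: "(real (n - 1) * S 0 + S 1) / (\<Sum>p<n. S p) \<le> price_AtoP SW_u n s P k \<and>
            price_AtoP SW_u n s P k \<le> real n * S 0 / (\<Sum>p<n. S p)"
    by (rule price_bounds[where SW=SW_u, OF pm pid]) (use U1 U2 U3 Upos in auto)
  have E1: "S 1 \<le> SW_e n s (P \<circ> pimax n) k"
    unfolding SW_e_def using umax S10 finU neU by auto
  have E2: "SW_e n s (P \<circ> id) k \<le> S (n-1)"
  proof -
    have "SW_e n s (P \<circ> id) k \<le> utility s (P \<circ> id) k (n-1)"
      unfolding SW_e_def using n2 by (intro Min_le) auto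
    then show ?thesis using uid n2 by simp
  qed
  have E3: "\<pi> permutes {..<n} \<Longrightarrow> S (n-1) \<le> SW_e n s (P \<circ> \<pi>) k \<and> SW_e n s (P \<circ> \<pi>) k \<le> S 0" for \<pi>
  proof -
    assume pi: "\<pi> permutes {..<n}"
    have "S (n-1) \<le> SW_e n s (P \<circ> \<pi>) k"
      unfolding SW_e_def using ub[OF pi] Sn0 finU neU by (auto intro: order_trans)
    moreover have "SW_e n s (P \<circ> \<pi>) k \<le> utility s (P \<circ> \<pi>) k 0"
      unfolding SW_e_def using n2 by (intro Min_le) auto
    ultimately show ?thesis using ub[OF pi, of 0] n2 by simp
  qed
  have PE: "S 1 / S (n-1) \<le> price_AtoP SW_e n s P k \<and> price_AtoP SW_e n s P k \<le> S 0 / S (n-1)"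
    by (rule price_bounds[where SW=SW_e, OF pm pid]) (use E1 E2 E3 S_pos n2 in auto)
  have N1: "SW_n n s (P \<circ> pimax n) k = S 0 ^ (n - 1) * S 1"
  proof -
    have "SW_n n s (P \<circ> pimax n) k = utility s (P \<circ> pimax n) k (n-1) * (\<Prod>i<n-1. utility s (P \<circ> pimax n) k i)"
      unfolding SW_n_def nsplit by (simp add: prod.insert)
    moreover have "(\<Prod>i<n-1. utility s (P \<circ> pimax n) k i) = (\<Prod>i<n-1. S 0)"
      by (rule prod.cong) (use umax in auto)
    moreover have "utility s (P \<circ> pimax n) k (n-1) = S 1" using umax n2 by auto
    ultimately show ?thesis by (simp add: algebra_simps)
  qed
  have N2: "SW_n n s (P \<circ> id) k = (\<Prod>p<n. S p)"
    unfolding SW_n_def by (rule prod.cong) (use uid in auto)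
  have N3: "\<pi> permutes {..<n} \<Longrightarrow> (\<Prod>p<n. S p) \<le> SW_n n s (P \<circ> \<pi>) k \<and> SW_n n s (P \<circ> \<pi>) k \<le> S 0 ^ n" for \<pi>
  proof -
    assume pi: "\<pi> permutes {..<n}"
    have "(\<Prod>p<n. S p) \<le> SW_n n s (P \<circ> \<pi>) k" unfolding SW_n_def
      by (rule prod_mono) (use ub[OF pi] S_pos in \<open>auto simp: less_imp_le\<close>)
    moreover have "SW_n n s (P \<circ> \<pi>) k \<le> (\<Prod>p<n. S 0)" unfolding SW_n_def
      by (rule prod_mono) (use ub[OF pi] S_pos in \<open>fastforce intro: less_imp_le order_trans\<close>)
    ultimately show ?thesis by simp
  qed
  have Npos: "0 < (\<Prod>p<n. S p)" using S_pos by (intro prod_pos) auto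
  have PN: "S 0 ^ (n - 1) * S 1 / (\<Prod>p<n. S p) \<le> price_AtoP SW_n n s P k \<and>
            price_AtoP SW_n n s P k \<le> S 0 ^ n / (\<Prod>p<n. S p)"
    by (rule price_bounds[where SW=SW_n, OF pm pid]) (use N1 N2 N3 Npos in auto)
  have e1: "(\<Sum>j=1..d. s j) = S 0" using blk_sum[of s 0 d] unfolding S_def by simp
  have e2: "(\<Sum>j=d+1..2*d. s j) = S 1" using blk_sum[of s d d] unfolding S_def by (simp add: mult_2)
  have e4: "(\<Sum>j=(n-1)*d+1..m. s j) = S (n-1)"
  proof -
    have "m = (n-1)*d + d" using assms(3) n2 by (metis Suc_diff_1 less_le_trans mult.commute mult_Suc pos2 add.commute)
    then show ?thesis using blk_sum[of s "(n-1)*d" d] unfolding S_def by (simp add: add.commute)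
  qed
  have e3: "(\<Sum>j=1..m. s j) = (\<Sum>p<n. S p)"
  proof -
    have "(\<Sum>j=1..m. s j) = (\<Sum>r<n*d. s (Suc r))" using blk_sum[of s 0 m] assms(3) by (simp add: mult.commute)
    also have "\<dots> = (\<Sum>p<n. \<Sum>r\<in>{p*d..<p*d+d}. s (Suc r))" by (rule sum.nat_group[symmetric])
    also have "\<dots> = (\<Sum>p<n. S p)"
    proof (rule sum.cong)
      fix p
      show "(\<Sum>r\<in>{p*d..<p*d+d}. s (Suc r)) = S p"
        using sum.shift_bounds_nat_ivl[of "\<lambda>j. s (Suc j)" 0 "p*d" d] unfolding S_def
        by (simp add: atLeast0LessThan add.commute)
    qed simp
    finally show ?thesis .
  qed
  have e5: "(\<Prod>i=1..n. \<Sum>j=(i-1)*d+1..i*d. s j) = (\<Prod>p<n. S p)"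
  proof -
    have "(\<Prod>i=1..n. \<Sum>j=(i-1)*d+1..i*d. s j) = (\<Prod>p<n. \<Sum>j=(Suc p-1)*d+1..Suc p*d. s j)"
      using prod.atLeast1_atMost_eq[of "\<lambda>i. \<Sum>j=(i-1)*d+1..i*d. s j" n] by simp
    also have "\<dots> = (\<Prod>p<n. S p)"
    proof (rule prod.cong)
      fix p
      show "(\<Sum>j=(Suc p-1)*d+1..Suc p*d. s j) = S p"
        using blk_sum[of s "p*d" d] unfolding S_def by (simp add: add.commute)
    qed simp
    finally show ?thesis .
  qed
  show ?thesis
    apply (rule exI[of _ P], rule exI[of _ k])
    unfolding e1 e2 e3 e4 e5
    using prof PU PE PN k_def by simp
qed

end
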